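(* Let $G$ be an infinite separable Hausdorff topological group. Then $G$ is not dense-subgroup-pseudocompact, i.e., there exists a dense subgroup of $G$ that is not pseudocompact.
   Context: A space is pseudocompact if every continuous real-valued function on it is bounded. A topological group $G$ is dense-subgroup-pseudocompact if every dense subgroup of $G$ (with the subspace topology) is pseudocompact. *)

theory Defs
  imports "HOL-Analysis.Analysis" "HOL-Algebra.Group"
begin

definition topological_group :: "('a, 'b) monoid_scheme \<Rightarrow> 'a topology \<Rightarrow> bool" where
  "topological_group G T \<longleftrightarrow>
     group G \<and> topspace T = carrier G \<and>
     continuous_map (prod_topology T T) T (\<lambda>(x, y). x \<otimes>\<^bsub>G\<^esub> y) \<and>
     continuous_map T T (\<lambda>x. inv\<^bsub>G\<^esub> x)"

definition pseudocompact_space :: "'a topology \<Rightarrow> bool" where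
  "pseudocompact_space X \<longleftrightarrow>
     (\<forall>f. continuous_map X euclideanreal f \<longrightarrow> (\<exists>B. \<forall>x\<in>topspace X. \<bar>f x\<bar> \<le> B))"

definition dense_subgroup_pseudocompact :: "('a, 'b) monoid_scheme \<Rightarrow> 'a topology \<Rightarrow> bool" where
  "dense_subgroup_pseudocompact G T \<longleftrightarrow>
     (\<forall>H. subgroup H G \<and> T closure_of H = topspace T \<longrightarrow> pseudocompact_space (subtopology T H))"

end

theory Submission
  imports Defs "HOL-Algebra.Generated_Groups"
begin

lemma clopen_sep:
  assumes "normal_space X" "t1_space X" "countable (topspace X)" "a \<in> topspace X" "b \<in> topspace X" "a \<noteq> b"
  obtains V where "openin X V" "closedin X V" "a \<in> V" "b \<notin> V"
proof -
  obtain f where f: "continuous_map X (top_of_set {0..1::real}) f" "f ` {a} \<subseteq> {0}" "f ` {b} \<subseteq> {1}"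
    using Urysohn_lemma[OF assms(1) closedin_t1_singleton[OF assms(2,4)] closedin_t1_singleton[OF assms(2,5)], of 0 1] assms(6)
    by (auto simp: disjnt_def)
  then have fc: "continuous_map X euclideanreal f" using continuous_map_in_subtopology by blast
  have "countable (f ` topspace X)" using assms(3) by blast
  moreover have "uncountable {0<..<1::real}" by (simp add: uncountable_open_interval)
  ultimately have "\<not> {0<..<1::real} \<subseteq> f ` topspace X" using countable_subset by blast
  then obtain r where r: "r \<in> {0<..<1}" "r \<notin> f ` topspace X" by blast
  define V where "V = {x \<in> topspace X. f x \<in> {..<r}}"
  have eqV: "V = {x \<in> topspace X. f x \<in> {..r}}" unfolding V_def using r(2) by force
  have cl: "closedin X {x \<in> topspace X. f x \<in> {..r}}"
    by (rule closedin_continuous_map_preimage[OF fc]) simp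
  have "openin X V" unfolding V_def by (rule openin_continuous_map_preimage[OF fc]) auto
  moreover have "closedin X V" using cl eqV by simp
  moreover have "a \<in> V" using f assms r by (auto simp: V_def)
  moreover have "b \<notin> V" using f assms r by (auto simp: V_def)
  ultimately show ?thesis using that by blast
qed

lemma not_pseudo_A:
  assumes "normal_space X" "t1_space X" "countable (topspace X)" "topspace X \<noteq> {}"
   and noiso: "\<And>U a. openin X U \<Longrightarrow> a \<in> U \<Longrightarrow> \<exists>b\<in>U. b \<noteq> a"
  shows "\<not> pseudocompact_space X"
proof
  assume ps: "pseudocompact_space X"
  define s where "s = from_nat_into (topspace X)"
  have s_surj: "\<exists>n. s n = x" if "x \<in> topspace X" for x
    using from_nat_into_surj[OF assms(3) that] s_def by auto
  define P where "P A n V \<longleftrightarrow> openin X V \<and> closedin X V \<and> s n \<in> V \<and> A - V \<noteq> {}" for A n V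
  define step where "step n A = (if s n \<in> A then A - (SOME V. P A n V) else A)" for n A
  define C where "C = rec_nat (topspace X) step"
  have C0: "C 0 = topspace X" by (simp add: C_def)
  have CS: "C (Suc n) = step n (C n)" for n by (simp add: C_def)
  have inv: "openin X (C n) \<and> closedin X (C n) \<and> C n \<noteq> {}" for n
  proof (induction n)
    case 0 then show ?case using C0 assms(4) by auto
  next
    case (Suc n)
    show ?case
    proof (cases "s n \<in> C n")
      case True
      obtain b where b: "b \<in> C n" "b \<noteq> s n" using noiso Suc True by blast
      have top: "C n \<subseteq> topspace X" using Suc openin_subset by blast
      obtain V where "openin X V" "closedin X V" "s n \<in> V" "b \<notin> V"
        using clopen_sep[OF assms(1-3), of "s n" b] b top True by blast
      then have "\<exists>V. P (C n) n V" unfolding P_def using b by blast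
      then have pV: "P (C n) n (SOME V. P (C n) n V)" by (rule someI_ex)
      have "C (Suc n) = C n - (SOME V. P (C n) n V)" using CS True step_def by simp
      moreover have "openin X (C n - (SOME V. P (C n) n V))"
        using pV Suc unfolding P_def by (intro openin_diff) auto
      moreover have "closedin X (C n - (SOME V. P (C n) n V))"
        using pV Suc unfolding P_def by (intro closedin_diff) auto
      moreover have "C n - (SOME V. P (C n) n V) \<noteq> {}"
        using pV unfolding P_def by auto
      ultimately show ?thesis by simp
    next
      case False
      then show ?thesis using CS step_def Suc by simp
    qed
  qed
  have sub: "C (Suc n) \<subseteq> C n" for n using CS step_def by auto
  have dec: "m \<le> n \<Longrightarrow> C n \<subseteq> C m" for m n
    by (rule lift_Suc_antimono_le[of C, OF sub])
  have notin: "s n \<notin> C (Suc n)" for n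
  proof (cases "s n \<in> C n")
    case True
    obtain b where b: "b \<in> C n" "b \<noteq> s n" using noiso inv True by blast
    have top: "C n \<subseteq> topspace X" using inv openin_subset by blast
    obtain V where "openin X V" "closedin X V" "s n \<in> V" "b \<notin> V"
      using clopen_sep[OF assms(1-3), of "s n" b] b top True by blast
    then have "\<exists>V. P (C n) n V" unfolding P_def using b by blast
    then have pV: "P (C n) n (SOME V. P (C n) n V)" by (rule someI_ex)
    then have "s n \<in> (SOME V. P (C n) n V)" unfolding P_def by blast
    then show ?thesis using CS[of n] True step_def by simp
  next
    case False then show ?thesis using sub by blast
  qed
  define f where "f x = (LEAST n. x \<notin> C (Suc n))" for x
  have ex: "\<exists>n. x \<notin> C (Suc n)" if "x \<in> topspace X" for x
    using s_surj[OF that] notin by blast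
  have level: "f x = k \<longleftrightarrow> x \<in> C k \<and> x \<notin> C (Suc k)" if x: "x \<in> topspace X" for x k
  proof
    assume fk: "f x = k"
    have "x \<notin> C (Suc k)" using LeastI_ex[OF ex[OF x]] fk f_def by simp
    moreover have "x \<in> C k"
    proof (cases k)
      case 0 then show ?thesis using C0 x by simp
    next
      case (Suc j)
      then have "j < f x" using fk by simp
      then have "\<not> (x \<notin> C (Suc j))" unfolding f_def by (rule not_less_Least)
      then show ?thesis using Suc by simp
    qed
    ultimately show "x \<in> C k \<and> x \<notin> C (Suc k)" by blast
  next
    assume h: "x \<in> C k \<and> x \<notin> C (Suc k)"
    have le: "f x \<le> k" unfolding f_def using h by (simp add: Least_le)
    have "x \<notin> C (Suc (f x))" using LeastI_ex[OF ex[OF x]] f_def by simp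
    moreover have "\<not> f x < k"
    proof
      assume "f x < k"
      then have "C k \<subseteq> C (Suc (f x))" using dec by simp
      then show False using h \<open>x \<notin> C (Suc (f x))\<close> by blast
    qed
    ultimately show "f x = k" using le by simp
  qed
  have cont: "continuous_map X euclideanreal (\<lambda>x. real (f x))"
    unfolding continuous_map
  proof (intro conjI allI impI)
    fix U :: "real set"
    assume "openin euclideanreal U"
    have eq: "{x \<in> topspace X. real (f x) \<in> U} = (\<Union>k\<in>{k. real k \<in> U}. C k - C (Suc k))"
      (is "?L = ?R")
    proof
      show "?L \<subseteq> ?R"
      proof
        fix x assume x: "x \<in> ?L"
        then have "x \<in> C (f x) - C (Suc (f x))" using level[of x "f x"] by blast
        then show "x \<in> ?R" using x by blast
      qed
      show "?R \<subseteq> ?L"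
      proof
        fix x assume "x \<in> ?R"
        then obtain k where k: "real k \<in> U" "x \<in> C k" "x \<notin> C (Suc k)" by blast
        have xt: "x \<in> topspace X" using k(2) inv[of k] openin_subset by blast
        then have "f x = k" using level[OF xt] k by blast
        then show "x \<in> ?L" using xt k by simp
      qed
    qed
    show "openin X {x \<in> topspace X. real (f x) \<in> U}"
      unfolding eq using inv by (intro openin_Union) (auto intro: openin_diff)
  qed auto
  obtain B where B: "\<forall>x\<in>topspace X. \<bar>real (f x)\<bar> \<le> B"
    using ps cont unfolding pseudocompact_space_def by blast
  define n where "n = nat \<lceil>B\<rceil>"
  obtain x where x: "x \<in> C (Suc n)" using inv by blast
  have xt: "x \<in> topspace X" using x inv openin_subset by blast
  have "\<not> f x \<le> n"
  proof
    assume "f x \<le> n"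
    then have "C (Suc n) \<subseteq> C (Suc (f x))" using dec by simp
    moreover have "x \<notin> C (Suc (f x))" using level[OF xt] by blast
    ultimately show False using x by blast
  qed
  then have "real (f x) \<ge> real n + 1" by simp
  moreover have "real n \<ge> B" unfolding n_def by linarith
  ultimately have "real (f x) > B" by linarith
  then show False using B xt by force
qed

lemma not_pseudo_B:
  assumes "countable (topspace X)" "infinite (topspace X)" "\<And>x. x \<in> topspace X \<Longrightarrow> openin X {x}"
  shows "\<not> pseudocompact_space X"
proof
  assume ps: "pseudocompact_space X"
  define f where "f x = real (to_nat_on (topspace X) x)" for x
  have allopen: "openin X S" if "S \<subseteq> topspace X" for S
  proof -
    have "S = \<Union>((\<lambda>x. {x}) ` S)" by blast
    moreover have "openin X (\<Union>((\<lambda>x. {x}) ` S))"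
      using assms(3) that by (intro openin_Union) auto
    ultimately show ?thesis by simp
  qed
  have cont: "continuous_map X euclideanreal f"
    unfolding continuous_map by (auto intro: allopen)
  obtain B where B: "\<forall>x\<in>topspace X. \<bar>f x\<bar> \<le> B"
    using ps cont unfolding pseudocompact_space_def by blast
  have "to_nat_on (topspace X) ` topspace X \<subseteq> {..nat \<lceil>B\<rceil>}"
  proof
    fix y assume "y \<in> to_nat_on (topspace X) ` topspace X"
    then obtain x where "x \<in> topspace X" "y = to_nat_on (topspace X) x" by blast
    then have "real y \<le> B" using B unfolding f_def by force
    then have "real y \<le> real (nat \<lceil>B\<rceil>)" using real_nat_ceiling_ge[of B] by linarith
    then show "y \<in> {..nat \<lceil>B\<rceil>}" by simp
  qed
  then have "finite (to_nat_on (topspace X) ` topspace X)" by (rule finite_subset) simp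
  then have "finite (topspace X)" using finite_imageD inj_on_to_nat_on[OF assms(1)] by blast
  then show False using assms(2) by simp
qed


lemma tg_facts:
  assumes "topological_group G T"
  shows "group G" "topspace T = carrier G"
    "continuous_map (prod_topology T T) T (\<lambda>(x, y). x \<otimes>\<^bsub>G\<^esub> y)"
    "continuous_map T T (\<lambda>x. inv\<^bsub>G\<^esub> x)"
  using assms unfolding topological_group_def by auto

lemma tg_mult:
  assumes "topological_group G T" "continuous_map X T f" "continuous_map X T g"
  shows "continuous_map X T (\<lambda>x. f x \<otimes>\<^bsub>G\<^esub> g x)"
proof -
  have "continuous_map X T ((\<lambda>(x, y). x \<otimes>\<^bsub>G\<^esub> y) \<circ> (\<lambda>x. (f x, g x)))"
    by (rule continuous_map_compose[OF continuous_map_pairedI[OF assms(2,3)] tg_facts(3)[OF assms(1)]])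
  then show ?thesis by (simp add: o_def)
qed

lemma tg_inv:
  assumes "topological_group G T" "continuous_map X T f"
  shows "continuous_map X T (\<lambda>x. inv\<^bsub>G\<^esub> (f x))"
proof -
  have "continuous_map X T ((\<lambda>x. inv\<^bsub>G\<^esub> x) \<circ> f)"
    by (rule continuous_map_compose[OF assms(2) tg_facts(4)[OF assms(1)]])
  then show ?thesis by (simp add: o_def)
qed

lemma tg_lmult:
  assumes "topological_group G T" "c \<in> carrier G"
  shows "continuous_map T T (\<lambda>x. c \<otimes>\<^bsub>G\<^esub> x)"
  by (rule tg_mult[OF assms(1)]) (use assms tg_facts(2)[OF assms(1)] in auto)

lemma tg_regular:
  assumes tg: "topological_group G T"
  shows "regular_space T"
proof -
  interpret group G using tg_facts[OF tg] by simp
  have top: "topspace T = carrier G" using tg_facts[OF tg] by simp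
  show ?thesis unfolding regular_space
  proof (intro allI impI)
    fix C a assume Ca: "closedin T C \<and> a \<in> topspace T - C"
    then have a: "a \<in> carrier G" "a \<notin> C" using top by auto
    define U where "U = topspace T - C"
    have U: "openin T U" using Ca U_def by (simp add: closedin_def)
    define \<phi> where "\<phi> = (\<lambda>p. a \<otimes>\<^bsub>G\<^esub> (fst p \<otimes>\<^bsub>G\<^esub> inv\<^bsub>G\<^esub> (snd p)))"
    have c\<phi>: "continuous_map (prod_topology T T) T \<phi>" unfolding \<phi>_def
      by (intro tg_mult[OF tg] tg_inv[OF tg] continuous_map_fst continuous_map_snd) (simp add: a top)
    define Op where "Op = {p \<in> topspace (prod_topology T T). \<phi> p \<in> U}"
    have "openin (prod_topology T T) Op" using openin_continuous_map_preimage[OF c\<phi> U] Op_def by simp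
    moreover have "(\<one>\<^bsub>G\<^esub>, \<one>\<^bsub>G\<^esub>) \<in> Op" using a
      by (simp add: Op_def \<phi>_def U_def top)
    ultimately obtain V1 V2 where V: "openin T V1" "openin T V2" "\<one>\<^bsub>G\<^esub> \<in> V1" "\<one>\<^bsub>G\<^esub> \<in> V2" "V1 \<times> V2 \<subseteq> Op"
      unfolding openin_prod_topology_alt by blast
    define V where "V = V1 \<inter> V2"
    have Vo: "openin T V" using V by (simp add: V_def openin_Int)
    define W where "W = {x \<in> topspace T. inv\<^bsub>G\<^esub> a \<otimes>\<^bsub>G\<^esub> x \<in> V}"
    have Wo: "openin T W" unfolding W_def
      by (rule openin_continuous_map_preimage[OF tg_lmult[OF tg] Vo]) (use a in simp)
    have aW: "a \<in> W" using a V top by (simp add: W_def V_def)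
    have "y \<notin> C" if y: "y \<in> Abstract_Topology.closure_of T W" for y
    proof -
      have "y \<in> topspace T" by (rule subsetD[OF closure_of_subset_topspace y])
      then have yt: "y \<in> carrier G" using top by simp
      define N where "N = {x \<in> topspace T. inv\<^bsub>G\<^esub> y \<otimes>\<^bsub>G\<^esub> x \<in> V}"
      have No: "openin T N" unfolding N_def
        by (rule openin_continuous_map_preimage[OF tg_lmult[OF tg] Vo]) (use yt in simp)
      have yN: "y \<in> N" using yt V top by (simp add: N_def V_def)
      have "\<forall>T'. y \<in> T' \<and> openin T T' \<longrightarrow> (\<exists>z. z \<in> W \<and> z \<in> T')"
        using y unfolding in_closure_of by simp
      then have "\<exists>z. z \<in> W \<and> z \<in> N" using No yN by simp
      then obtain z where z: "z \<in> W" "z \<in> N" by blast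
      have zc: "z \<in> carrier G" using z top by (auto simp: W_def)
      define w where "w = inv\<^bsub>G\<^esub> a \<otimes>\<^bsub>G\<^esub> z"
      define v where "v = inv\<^bsub>G\<^esub> y \<otimes>\<^bsub>G\<^esub> z"
      have "(w, v) \<in> V1 \<times> V2" using z by (auto simp: W_def N_def V_def w_def v_def)
      then have "(w, v) \<in> Op" using V(5) by blast
      then have "\<phi> (w, v) \<in> U" by (simp add: Op_def)
      moreover have "\<phi> (w, v) = y"
      proof -
        have i1: "inv\<^bsub>G\<^esub> v = inv\<^bsub>G\<^esub> z \<otimes>\<^bsub>G\<^esub> y"
          using yt zc by (simp add: v_def inv_mult_group)
        have i2: "z \<otimes>\<^bsub>G\<^esub> (inv\<^bsub>G\<^esub> z \<otimes>\<^bsub>G\<^esub> y) = y"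
          using yt zc by (simp add: m_assoc[symmetric])
        have i3: "w \<otimes>\<^bsub>G\<^esub> inv\<^bsub>G\<^esub> v = inv\<^bsub>G\<^esub> a \<otimes>\<^bsub>G\<^esub> y"
          using a yt zc i2 by (simp add: i1 w_def m_assoc)
        have i4: "a \<otimes>\<^bsub>G\<^esub> (inv\<^bsub>G\<^esub> a \<otimes>\<^bsub>G\<^esub> y) = y"
          using a yt by (simp add: m_assoc[symmetric])
        show ?thesis using i3 i4 by (simp add: \<phi>_def)
      qed
      ultimately show ?thesis by (simp add: U_def)
    qed
    then have "disjnt C (Abstract_Topology.closure_of T W)" by (auto simp: disjnt_def)
    then show "\<exists>U. openin T U \<and> a \<in> U \<and> disjnt C (Abstract_Topology.closure_of T U)" using Wo aW by blast
  qed
qed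

lemma (in group) countable_generate:
  assumes "countable D" "D \<subseteq> carrier G"
  shows "countable (generate G D)"
proof -
  define K where "K = rec_nat (insert \<one> (D \<union> (\<lambda>x. inv x) ` D)) (\<lambda>_ A. A \<union> (\<lambda>(x, y). x \<otimes> y) ` (A \<times> A))"
  have K0: "K 0 = insert \<one> (D \<union> (\<lambda>x. inv x) ` D)" by (simp add: K_def)
  have KS: "K (Suc n) = K n \<union> (\<lambda>(x, y). x \<otimes> y) ` (K n \<times> K n)" for n by (simp add: K_def)
  have cK: "countable (K n)" for n
    by (induction n) (use assms in \<open>auto simp: K0 KS\<close>)
  have mono: "m \<le> n \<Longrightarrow> K m \<subseteq> K n" for m n
    by (rule lift_Suc_mono_le[of K]) (auto simp: KS)
  have "generate G D \<subseteq> (\<Union>n. K n)"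
  proof
    fix x assume "x \<in> generate G D"
    then show "x \<in> (\<Union>n. K n)"
    proof (induction rule: generate.induct)
      case one then show ?case using K0 by blast
    next
      case (incl h) then show ?case using K0 by blast
    next
      case (inv h) then show ?case using K0 by blast
    next
      case (eng h1 h2)
      then obtain n1 n2 where "h1 \<in> K n1" "h2 \<in> K n2" by blast
      then have "h1 \<in> K (max n1 n2)" "h2 \<in> K (max n1 n2)" using mono[of n1 "max n1 n2"] mono[of n2 "max n1 n2"] by auto
      then have "h1 \<otimes> h2 \<in> K (Suc (max n1 n2))" unfolding KS by blast
      then show ?case by blast
    qed
  qed
  moreover have "countable (\<Union>n. K n)" using cK by blast
  ultimately show ?thesis using countable_subset by blast
qed

theorem mainTheorem6:
  fixes G :: "('a, 'b) monoid_scheme" and T :: "'a topology"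
  assumes "topological_group G T"
    and "Hausdorff_space T"
    and "separable_space T"
    and "infinite (carrier G)"
  shows "\<not> dense_subgroup_pseudocompact G T \<and>
         (\<exists>H. subgroup H G \<and> T closure_of H = topspace T \<and> \<not> pseudocompact_space (subtopology T H))"
proof -
  note tg = assms(1)
  interpret group G using tg_facts[OF tg] by simp
  have top: "topspace T = carrier G" using tg_facts[OF tg] by simp
  obtain D where D: "countable D" "D \<subseteq> topspace T" "Abstract_Topology.closure_of T D = topspace T"
    using assms(3) unfolding separable_space_def by blast
  define H where "H = generate G D"
  have Hsub: "subgroup H G" unfolding H_def using generate_is_subgroup D top by simp
  have Hc: "countable H" unfolding H_def using countable_generate D top by simp
  have DH: "D \<subseteq> H" unfolding H_def by (rule subsetI, rule generate.incl)
  have Hdense: "Abstract_Topology.closure_of T H = topspace T"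
    using closure_of_subset_topspace[of T H] closure_of_mono[OF DH, of T] D(3) by blast
  have Hcar: "H \<subseteq> carrier G" using Hsub subgroup.subset by blast
  define S where "S = subtopology T H"
  have topS: "topspace S = H" using Hcar top by (simp add: S_def Int_absorb1)
  have "\<not> pseudocompact_space S"
  proof (cases "\<exists>h\<in>H. openin S {h}")
    case True
    then obtain h where h: "h \<in> H" "openin S {h}" by blast
    obtain W where W: "openin T W" "{h} = W \<inter> H" using h(2) unfolding S_def openin_subtopology by blast
    have hc: "h \<in> carrier G" using h Hcar by blast
    have allopen: "openin S {k}" if k: "k \<in> H" for k
    proof -
      have kc: "k \<in> carrier G" using k Hcar by blast
      define c where "c = h \<otimes>\<^bsub>G\<^esub> inv\<^bsub>G\<^esub> k"
      have cc: "c \<in> carrier G" using hc kc by (simp add: c_def)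
      have cH: "c \<in> H" using h k Hsub by (simp add: c_def subgroup.m_closed subgroup.m_inv_closed)
      define W' where "W' = {x \<in> topspace T. c \<otimes>\<^bsub>G\<^esub> x \<in> W}"
      have "openin T W'" unfolding W'_def by (rule openin_continuous_map_preimage[OF tg_lmult[OF tg cc] W(1)])
      moreover have "{k} = W' \<inter> H"
      proof
        have "c \<otimes>\<^bsub>G\<^esub> k = h" using hc kc by (simp add: c_def m_assoc)
        then show "{k} \<subseteq> W' \<inter> H" using W(2) k kc top by (auto simp: W'_def)
      next
        show "W' \<inter> H \<subseteq> {k}"
        proof
          fix x assume x: "x \<in> W' \<inter> H"
          then have xc: "x \<in> carrier G" using Hcar by blast
          have "c \<otimes>\<^bsub>G\<^esub> x \<in> H" using x cH Hsub by (simp add: subgroup.m_closed)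
          then have "c \<otimes>\<^bsub>G\<^esub> x = h" using x W(2) by (auto simp: W'_def)
          then have "h \<otimes>\<^bsub>G\<^esub> (inv\<^bsub>G\<^esub> k \<otimes>\<^bsub>G\<^esub> x) = h" using hc kc xc
            by (simp add: c_def m_assoc)
          then have "inv\<^bsub>G\<^esub> k \<otimes>\<^bsub>G\<^esub> x = \<one>\<^bsub>G\<^esub>" using hc kc xc
            by (simp add: l_cancel_one)
          then have "x = k" using kc xc by (metis inv_equality inv_inv inv_closed)
          then show "x \<in> {k}" by simp
        qed
      qed
      ultimately show ?thesis unfolding S_def openin_subtopology by blast
    qed
    have "infinite H"
    proof
      assume "finite H"
      then have "closedin T H" using Hausdorff_imp_t1_space[OF assms(2)] Hcar top
        unfolding t1_space_closedin_finite by blast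
      then have "H = carrier G" using Hdense top closure_of_closedin by metis
      then show False using assms(4) \<open>finite H\<close> by simp
    qed
    then show ?thesis by (intro not_pseudo_B) (use topS Hc allopen in auto)
  next
    case False
    have reg: "regular_space S" unfolding S_def by (rule regular_space_subtopology[OF tg_regular[OF tg]])
    have "Lindelof_space S" using Hc topS by (intro countable_imp_Lindelof_space) simp
    then have norm: "normal_space S" using reg regular_Lindelof_imp_normal_space by blast
    have t1: "t1_space S" unfolding S_def by (rule t1_space_subtopology[OF Hausdorff_imp_t1_space[OF assms(2)]])
    have ne: "topspace S \<noteq> {}" using topS Hsub subgroup.one_closed by blast
    show ?thesis
    proof (rule not_pseudo_A[OF norm t1])
      show "countable (topspace S)" using topS Hc by simp
      show "topspace S \<noteq> {}" by (rule ne)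
    next
      fix U a assume U: "openin S U" "a \<in> U"
      show "\<exists>b\<in>U. b \<noteq> a"
      proof (rule ccontr)
        assume "\<not> (\<exists>b\<in>U. b \<noteq> a)"
        then have "U = {a}" using U by blast
        moreover have "a \<in> H" using U openin_subset topS by blast
        ultimately show False using False U by blast
      qed
    qed
  qed
  then show ?thesis unfolding dense_subgroup_pseudocompact_def using Hsub Hdense S_def by blast
qed

end
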